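(* Consider the following random construction (the graph gamma process). Let $(\rho_i)_{i\ge 1}$ be the atom weights of a gamma process with mass parameter $\gamma_{0,\rho}>0$ and rate $c_\rho>0$, and let $(\tau_i)_{i\ge1}$ be positive weights attached to the same countably many nodes $i$, distributed as the atom weights of a gamma process with mass parameter $\gamma_{0,\tau}>0$ and rate $c_\tau>0$. Let $(r_\kappa)_{\kappa\ge1}$ be the atom weights of a gamma process with mass parameter $\gamma_0>0$ and rate $c>0$ (i.e. the points of a Poisson process on $(0,\infty)$ with intensity $\gamma_0 r^{-1}e^{-cr}\,dr$). Given these, for every community $\kappa\ge1$ and nodes $i,j\ge1$ draw independently $$\theta_{i\kappa}\sim\mathrm{Gamma}(\rho_i,1/e),\qquad \psi_{j\kappa}\sim\mathrm{Gamma}(\tau_j,1/f),$$ with constants $e,f>0$ (Gamma$(a,s)$ denotes shape $a$, scale $s$), then independently $z_{ij\kappa}\sim\mathrm{Bernoulli}\big(1-e^{-r_\kappa\theta_{i\kappa}\psi_{j\kappa}}\big)$, and set $$z_{ij}=\bigvee_{\kappa=1}^\infty z_{ij\kappa},$$ i.e. $z_{ij}=1$ if $z_{ij\kappa}=1$ for at least one $\kappa$ and $z_{ij}=0$ otherwise (equivalently $z_{ij}\sim\mathrm{Bernoulli}(1-e^{-\sum_{\kappa}r_\kappa\theta_{i\kappa}\psi_{j\kappa}})$). Then the number of edges of the graph with adjacency matrix ${\bf Z}=(z_{ij})$, namely $\sum_{i=1}^\infty\sum_{j=1}^\infty z_{ij}$, is finite (almost surely).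
   Context: The binary array ${\bf Z}=(z_{ij})_{i,j\ge1}$ is interpreted as the adjacency matrix of a directed graph on countably infinitely many nodes, obtained as the entrywise logical OR of the community-specific adjacency matrices $(z_{ij\kappa})_{i,j}$, $\kappa\ge1$. *)

theory Defs
  imports "HOL-Probability.Probability"
begin

text \<open>For degenerate parameters
  (a \<le> 0 or s \<le> 0, which occur only on null sets in the model) we use the
  point mass at 0 as a harmless convention so that kernels are always
  probability measures.\<close>
definition gamma_density :: "real \<Rightarrow> real \<Rightarrow> real \<Rightarrow> real" where
  "gamma_density a s x =
     (if 0 < x then x powr (a - 1) * exp (- x / s) / (Gamma a * s powr a) else 0)"

definition gamma_measure :: "real \<Rightarrow> real \<Rightarrow> real measure" where
  "gamma_measure a s =
     (if 0 < a \<and> 0 < s then density lborel (\<lambda>x. ennreal (gamma_density a s x))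
      else return borel 0)"

definition bernoulli_measure :: "real \<Rightarrow> bool measure" where
  "bernoulli_measure p = measure_pmf (bernoulli_pmf p)"

definition gamma_process_intensity :: "real \<Rightarrow> real \<Rightarrow> real measure" where
  "gamma_process_intensity g0 c =
     density lborel (\<lambda>r. ennreal (if 0 < r then g0 / r * exp (- c * r) else 0))"

definition pcount :: "real set \<Rightarrow> (nat \<Rightarrow> real) \<Rightarrow> nat" where
  "pcount A x = card {i. x i \<in> A}"

text \<open>P is the law of an enumeration (x_i)_{i\<ge>1} (indexed here by nat) of the
  points of a Poisson process with intensity measure mu on the real line:
  the points are a.s. distinct, for every Borel set A of finite intensity the
  number of points in A is (a.s. finite and) Poisson(mu A) distributed, and
  the counts of finitely many pairwise disjoint such sets are independent.\<close>
definition poisson_process_law :: "real measure \<Rightarrow> (nat \<Rightarrow> real) measure \<Rightarrow> bool" where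
  "poisson_process_law mu P \<longleftrightarrow>
     prob_space P \<and>
     sets P = sets (PiM (UNIV :: nat set) (\<lambda>_. borel)) \<and>
     (AE x in P. inj x) \<and>
     (\<forall>A k. A \<in> sets borel \<and> emeasure mu A < \<infinity> \<longrightarrow>
        measure P {x \<in> space P. finite {i. x i \<in> A} \<and> pcount A x = k}
          = measure mu A ^ k / fact k * exp (- measure mu A)) \<and>
     (\<forall>(n::nat) (A :: nat \<Rightarrow> real set).
        (\<forall>m<n. A m \<in> sets borel \<and> emeasure mu (A m) < \<infinity>) \<and> disjoint_family_on A {..<n}
        \<longrightarrow> prob_space.indep_vars P (\<lambda>_. count_space UNIV) (\<lambda>m x. pcount (A m) x) {..<n})"

definition gamma_process_law :: "real \<Rightarrow> real \<Rightarrow> (nat \<Rightarrow> real) measure \<Rightarrow> bool" where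
  "gamma_process_law g0 c P \<longleftrightarrow> poisson_process_law (gamma_process_intensity g0 c) P"

definition ggp_law ::
  "(nat \<Rightarrow> real) measure \<Rightarrow> (nat \<Rightarrow> real) measure \<Rightarrow> (nat \<Rightarrow> real) measure
   \<Rightarrow> real \<Rightarrow> real \<Rightarrow> (nat \<times> nat \<times> nat \<Rightarrow> bool) measure" where
  "ggp_law Prho Ptau Pr e f =
     bind (Prho \<Otimes>\<^sub>M (Ptau \<Otimes>\<^sub>M Pr)) (\<lambda>(rho, tau, r).
       bind (PiM (UNIV :: (nat \<times> nat) set) (\<lambda>(i, k). gamma_measure (rho i) (1 / e))) (\<lambda>theta.
         bind (PiM (UNIV :: (nat \<times> nat) set) (\<lambda>(j, k). gamma_measure (tau j) (1 / f))) (\<lambda>psi.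
           PiM (UNIV :: (nat \<times> nat \<times> nat) set)
             (\<lambda>(i, j, k). bernoulli_measure (1 - exp (- (r k * theta (i, k) * psi (j, k))))))))"

definition ggp_adj :: "(nat \<times> nat \<times> nat \<Rightarrow> bool) \<Rightarrow> nat \<Rightarrow> nat \<Rightarrow> bool" where
  "ggp_adj z i j \<longleftrightarrow> (\<exists>k. z (i, j, k))"

end

theory Submission
  imports Defs
begin


lemma AE_bind_nomeas:
  assumes M: "space M \<noteq> {}"
    and sets_f: "\<And>x. x \<in> space M \<Longrightarrow> sets (f x) = sets S"
    and P: "{y \<in> space S. \<not> P y} \<in> sets S"
    and AE: "AE x in M. AE y in f x. P y"
  shows "AE y in bind M f. P y"
proof -
  define x0 where "x0 = (SOME x. x \<in> space M)"
  have x0: "x0 \<in> space M" unfolding x0_def using M by (simp add: some_in_eq)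
  define D where "D = distr M (subprob_algebra (f x0)) f"
  have bind_eq: "bind M f = join D" unfolding D_def x0_def by (simp add: bind_nonempty M)
  have setsD: "sets D = sets (subprob_algebra (f x0))" unfolding D_def by simp
  let ?B = "{y \<in> space S. \<not> P y}"
  have B0: "?B \<in> sets (f x0)" using sets_f[OF x0] P by simp
  have spf: "\<And>x. x \<in> space M \<Longrightarrow> space (f x) = space S"
    using sets_f by (rule sets_eq_imp_space_eq)
  have AE2: "AE x in M. emeasure (f x) ?B = 0"
    using AE
  proof (rule AE_mp)
    show "AE x in M. (AE y in f x. P y) \<longrightarrow> emeasure (f x) ?B = 0"
    proof (rule AE_I2, rule impI)
      fix x assume x: "x \<in> space M" and ae: "AE y in f x. P y"
      have "?B = {y \<in> space (f x). \<not> P y}" using spf[OF x] by simp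
      moreover have "?B \<in> sets (f x)" using sets_f[OF x] P by simp
      ultimately show "emeasure (f x) ?B = 0" using ae AE_iff_measurable by metis
    qed
  qed
  define G where "G = {M' \<in> space (subprob_algebra (f x0)). emeasure M' ?B \<noteq> 0}"
  have G: "G \<in> sets (subprob_algebra (f x0))"
  proof -
    have "(\<lambda>M'. emeasure M' ?B) \<in> borel_measurable (subprob_algebra (f x0))"
      using B0 by (rule measurable_emeasure_subprob_algebra)
    then show ?thesis unfolding G_def by measurable
  qed
  have pre: "f -` G \<inter> space M \<subseteq> {x \<in> space M. emeasure (f x) ?B \<noteq> 0}"
    unfolding G_def by auto
  obtain N where N: "N \<in> null_sets M" "{x \<in> space M. \<not> (emeasure (f x) ?B = 0)} \<subseteq> N"
    using AE2 by (auto elim!: AE_E)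
  have preM: "emeasure M (f -` G \<inter> space M) = 0"
  proof (cases "f -` G \<inter> space M \<in> sets M")
    case True
    then show ?thesis using N pre by (meson emeasure_eq_0 null_setsD1 null_setsD2 order_trans)
  next
    case False
    then show ?thesis by (simp add: emeasure_notin_sets)
  qed
  have DG: "emeasure D G = 0"
  proof -
    have "emeasure D G \<le> emeasure M (f -` G \<inter> space M)"
      unfolding D_def distr_def using G
      by (simp add: emeasure_measure_of_conv)
    then show ?thesis using preM by simp
  qed
  have "emeasure (join D) ?B = (\<integral>\<^sup>+ M'. emeasure M' ?B \<partial>D)"
    using setsD B0 by (rule emeasure_join)
  also have "\<dots> = (\<integral>\<^sup>+ M'. emeasure M' ?B * indicator G M' \<partial>D)"
  proof (rule nn_integral_cong)
    fix M' assume "M' \<in> space D"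
    then have "M' \<in> space (subprob_algebra (f x0))" using setsD sets_eq_imp_space_eq by blast
    then show "emeasure M' ?B = emeasure M' ?B * indicator G M'"
      unfolding G_def by (auto simp: indicator_def)
  qed
  also have "\<dots> = 0"
  proof -
    have "AE M' in D. M' \<notin> G"
      using DG G setsD by (intro AE_I'[of G]) auto
    then have "AE M' in D. emeasure M' ?B * indicator G M' = 0"
      by (auto simp: indicator_def)
    then show ?thesis by (subst nn_integral_cong_AE[where v="\<lambda>_. 0"]) auto
  qed
  finally have Bz: "emeasure (bind M f) ?B = 0" using bind_eq by simp
  have sb: "sets (bind M f) = sets S" using sets_f M by (rule sets_bind)
  have spb: "space (bind M f) = space S" using sets_eq_imp_space_eq[OF sb] .
  show ?thesis
    using Bz P sb spb by (subst AE_iff_measurable[of ?B]) auto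
qed




lemma AE_pair_fst':
  assumes "AE x in M. P x" "sigma_finite_measure N"
  shows "AE y in M \<Otimes>\<^sub>M N. P (fst y)"
proof -
  obtain A where A: "A \<in> null_sets M" "{x \<in> space M. \<not> P x} \<subseteq> A" using assms(1) by (auto elim!: AE_E)
  have "A \<times> space N \<in> null_sets (M \<Otimes>\<^sub>M N)"
    using A assms(2) by (simp add: null_sets_def sigma_finite_measure.emeasure_pair_measure_Times)
  moreover have "{y \<in> space (M \<Otimes>\<^sub>M N). \<not> P (fst y)} \<subseteq> A \<times> space N"
    using A by (auto simp: space_pair_measure)
  ultimately show ?thesis by (auto intro: AE_I)
qed

lemma AE_pair_snd':
  assumes "AE x in N. P x" "sigma_finite_measure N"
  shows "AE y in M \<Otimes>\<^sub>M N. P (snd y)"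
proof -
  obtain A where A: "A \<in> null_sets N" "{x \<in> space N. \<not> P x} \<subseteq> A" using assms(1) by (auto elim!: AE_E)
  have "space M \<times> A \<in> null_sets (M \<Otimes>\<^sub>M N)"
    using A assms(2) by (simp add: null_sets_def sigma_finite_measure.emeasure_pair_measure_Times)
  moreover have "{y \<in> space (M \<Otimes>\<^sub>M N). \<not> P (snd y)} \<subseteq> space M \<times> A"
    using A by (auto simp: space_pair_measure)
  ultimately show ?thesis by (auto intro: AE_I)
qed

lemma measurable_csum:
  fixes f :: "'i::countable \<Rightarrow> 'a \<Rightarrow> ennreal"
  assumes [measurable]: "\<And>i. f i \<in> borel_measurable M"
  shows "(\<lambda>x. \<integral>\<^sup>+i. f i x \<partial>count_space UNIV) \<in> borel_measurable M"
proof (cases "finite (UNIV :: 'i set)")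
  case True
  then show ?thesis by (simp add: nn_integral_count_space_finite)
next
  case False
  note * = bij_betw_from_nat_into[OF countableI_type False]
  have **: "\<And>x. (\<integral>\<^sup>+i. f i x \<partial>count_space UNIV) = (\<Sum>n. f (from_nat_into UNIV n) x)"
    by (simp add: nn_integral_bij_count_space[symmetric, OF *] nn_integral_count_space_nat)
  show ?thesis unfolding ** by measurable
qed

lemma csum_swap:
  fixes f :: "'i::countable \<Rightarrow> 'j::countable \<Rightarrow> ennreal"
  shows "(\<integral>\<^sup>+i. \<integral>\<^sup>+j. f i j \<partial>count_space UNIV \<partial>count_space UNIV)
       = (\<integral>\<^sup>+j. \<integral>\<^sup>+i. f i j \<partial>count_space UNIV \<partial>count_space UNIV)"
  by (rule nn_integral_count_space_nn_integral) auto

lemma nn_integral_PiM_comp: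
  assumes "product_prob_space M" "i \<in> I" "g \<in> borel_measurable (M i)"
  shows "(\<integral>\<^sup>+\<omega>. g (\<omega> i) \<partial>PiM I M) = (\<integral>\<^sup>+x. g x \<partial>M i)"
proof -
  have "(\<integral>\<^sup>+x. g x \<partial>M i) = (\<integral>\<^sup>+x. g x \<partial>distr (PiM I M) (M i) (\<lambda>\<omega>. \<omega> i))"
    using product_prob_space.PiM_component[OF assms(1,2)] by simp
  also have "\<dots> = (\<integral>\<^sup>+\<omega>. g (\<omega> i) \<partial>PiM I M)"
    using assms(2,3) by (subst nn_integral_distr) (auto intro: measurable_component_singleton)
  finally show ?thesis ..
qed

lemma pmf_bernoulli_True_gen: "pmf (bernoulli_pmf p) True = min 1 (max 0 p)"
proof -
  interpret pmf_as_function .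
  show ?thesis by transfer simp
qed

lemma pmf_bernoulli_True_le: "ennreal (pmf (bernoulli_pmf p) True) \<le> ennreal p"
  unfolding pmf_bernoulli_True_gen
  by (cases "p \<le> 0") (auto intro!: ennreal_leI simp: ennreal_neg)

lemma one_minus_exp_le: "ennreal (1 - exp (- x)) \<le> ennreal \<bar>x\<bar>"
proof (cases "x \<ge> 0")
  case True
  have "1 - exp (-x) \<le> x" using exp_ge_add_one_self[of "-x"] by simp
  then show ?thesis using True by (intro ennreal_leI) auto
next
  case False
  then have "1 - exp (-x) \<le> 0" by simp
  then show ?thesis by (simp add: ennreal_neg)
qed




lemma gamma_integral_aux:
  fixes b s :: real
  assumes b: "0 < b" and s: "0 < s"
  shows "(\<integral>\<^sup>+x. ennreal (if 0 < x then x powr (b - 1) * exp (- x / s) else 0) \<partial>lborel)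
         = ennreal (Gamma b * s powr b)"
proof -
  let ?f = "\<lambda>x::real. ennreal (if 0 < x then x powr (b - 1) * exp (- x / s) else 0)"
  have "(\<integral>\<^sup>+x. ?f x \<partial>lborel) = \<bar>s\<bar> * (\<integral>\<^sup>+x. ?f (0 + s * x) \<partial>lborel)"
    by (rule nn_integral_real_affine) (use s in auto)
  also have "(\<lambda>x. ?f (0 + s * x)) = (\<lambda>x. ennreal (s powr (b - 1)) * ennreal (indicator {0..} x * x powr (b - 1) / exp x))"
  proof
    fix x :: real
    show "?f (0 + s * x) = ennreal (s powr (b - 1)) * ennreal (indicator {0..} x * x powr (b - 1) / exp x)"
    proof (cases "0 < x")
      case True
      then have "(s * x) powr (b - 1) * exp (- (s * x) / s) = s powr (b - 1) * (x powr (b - 1) / exp x)"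
        using s by (simp add: powr_mult exp_minus field_simps)
      then show ?thesis using True s by (simp add: ennreal_mult'[symmetric] zero_less_mult_iff)
    next
      case False
      then show ?thesis using s by (cases "x = 0") (auto simp: zero_less_mult_iff indicator_def)
    qed
  qed
  also have "(\<integral>\<^sup>+x. ennreal (s powr (b - 1)) * ennreal (indicator {0..} x * x powr (b - 1) / exp x) \<partial>lborel)
      = ennreal (s powr (b - 1)) * ennreal (Gamma b)"
    using b by (subst nn_integral_cmult) (auto simp: Gamma_conv_nn_integral_real)
  also have "\<bar>s\<bar> * (ennreal (s powr (b - 1)) * ennreal (Gamma b)) = ennreal (Gamma b * s powr b)"
  proof -
    have "s * s powr (b - 1) = s powr b" using s by (simp add: powr_diff)
    moreover have "Gamma b \<ge> 0" using b by (simp add: Gamma_real_pos less_imp_le)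
    ultimately show ?thesis using s
      by (simp add: ennreal_mult'[symmetric] ennreal_mult[symmetric] mult_ac)
  qed
  finally show ?thesis .
qed

lemma gamma_density_measurable[measurable]: "gamma_density a s \<in> borel_measurable borel"
  unfolding gamma_density_def[abs_def] by measurable

lemma sets_gamma_measure[simp, measurable_cong]: "sets (gamma_measure a s) = sets borel"
  by (simp add: gamma_measure_def)

lemma space_gamma_measure[simp]: "space (gamma_measure a s) = UNIV"
  by (simp add: gamma_measure_def)

lemma prob_space_gamma_measure: "prob_space (gamma_measure a s)"
proof (cases "0 < a \<and> 0 < s")
  case True
  then have a: "0 < a" and s: "0 < s" by auto
  have G: "Gamma a > 0" using a by (simp add: Gamma_real_pos)
  have eq: "\<And>x. ennreal (gamma_density a s x) = ennreal (if 0 < x then x powr (a - 1) * exp (- x / s) else 0) * ennreal (1 / (Gamma a * s powr a))"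
    unfolding gamma_density_def using G s by (auto simp: ennreal_mult'[symmetric] divide_inverse)
  show ?thesis
  proof (rule prob_spaceI)
    have "emeasure (gamma_measure a s) (space (gamma_measure a s))
        = (\<integral>\<^sup>+x. ennreal (gamma_density a s x) \<partial>lborel)"
    proof -
      have "emeasure (density lborel (\<lambda>x. ennreal (gamma_density a s x))) UNIV
          = (\<integral>\<^sup>+x. ennreal (gamma_density a s x) * indicator UNIV x \<partial>lborel)"
        by (rule emeasure_density) auto
      then show ?thesis using True by (simp add: gamma_measure_def)
    qed
    also have "\<dots> = ennreal (Gamma a * s powr a) * ennreal (1 / (Gamma a * s powr a))"
      unfolding eq by (subst nn_integral_multc) (auto simp: gamma_integral_aux a s)
    also have "\<dots> = 1" using G s by (simp add: ennreal_mult'[symmetric])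
    finally show "emeasure (gamma_measure a s) (space (gamma_measure a s)) = 1" .
  qed
next
  case False
  then have "gamma_measure a s = return borel 0" unfolding gamma_measure_def by (simp only: if_False)
  then show ?thesis by (simp add: prob_space_return)
qed

lemma gamma_measure_mean:
  assumes s: "0 < s"
  shows "(\<integral>\<^sup>+x. ennreal \<bar>x\<bar> \<partial>gamma_measure a s) = ennreal a * ennreal s"
proof (cases "0 < a")
  case True
  note a = this
  have G: "Gamma a > 0" using a by (simp add: Gamma_real_pos)
  have eq: "\<And>x. ennreal (gamma_density a s x) * ennreal \<bar>x\<bar> = ennreal (if 0 < x then x powr ((a + 1) - 1) * exp (- x / s) else 0) * ennreal (1 / (Gamma a * s powr a))"
  proof -
    fix x :: real
    show "ennreal (gamma_density a s x) * ennreal \<bar>x\<bar> = ennreal (if 0 < x then x powr ((a + 1) - 1) * exp (- x / s) else 0) * ennreal (1 / (Gamma a * s powr a))"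
    proof (cases "0 < x")
      case True
      have "x powr (a - 1) * x = x powr a" using True by (simp add: powr_diff)
      then show ?thesis unfolding gamma_density_def using G s True
        by (simp add: ennreal_mult'[symmetric] divide_inverse mult_ac)
    qed (simp add: gamma_density_def)
  qed
  have "(\<integral>\<^sup>+x. ennreal \<bar>x\<bar> \<partial>gamma_measure a s) = (\<integral>\<^sup>+x. ennreal (gamma_density a s x) * ennreal \<bar>x\<bar> \<partial>lborel)"
    using a s by (simp add: gamma_measure_def nn_integral_density[where f="\<lambda>x. ennreal (gamma_density a s x)"])
  also have "\<dots> = ennreal (Gamma (a + 1) * s powr (a + 1)) * ennreal (1 / (Gamma a * s powr a))"
    unfolding eq using a s by (subst nn_integral_multc) (auto simp: gamma_integral_aux)
  also have "\<dots> = ennreal (a * s)"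
  proof -
    have "Gamma (a + 1) * s powr (a + 1) * (1 / (Gamma a * s powr a)) = a * s"
    proof -
      have g1: "Gamma (a + 1) = a * Gamma a"
        using Gamma_plus1[of a] nonpos_Ints_nonpos[of a] a by force
      show ?thesis using G s unfolding g1 by (simp add: powr_add field_simps)
    qed
    moreover have "Gamma (a + 1) * s powr (a + 1) \<ge> 0" using a by (simp add: Gamma_real_pos less_imp_le)
    ultimately show ?thesis using G s by (simp add: ennreal_mult'[symmetric])
  qed
  finally show ?thesis using a s by (simp add: ennreal_mult)
next
  case False
  then show ?thesis by (simp add: gamma_measure_def nn_integral_return ennreal_neg)
qed




lemma poisson_basic:
  assumes "poisson_process_law mu P"
  shows "prob_space P" "sets P = sets (PiM (UNIV :: nat set) (\<lambda>_. borel))"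
    "space P = UNIV"
    "\<And>i. (\<lambda>x. x i) \<in> measurable P borel"
proof -
  show 1: "prob_space P" "sets P = sets (PiM (UNIV :: nat set) (\<lambda>_. borel))"
    using assms unfolding poisson_process_law_def by auto
  show "space P = UNIV" using sets_eq_imp_space_eq[OF 1(2)] by (simp add: space_PiM)
  fix i show "(\<lambda>x. x i) \<in> measurable P borel"
    using measurable_cong_sets[OF 1(2) refl] by (auto intro: measurable_component_singleton)
qed

lemma suminf_indicator_eq:
  "(\<Sum>i. indicator A (x i) :: ennreal) = (if finite {i. x i \<in> A} then of_nat (card {i. x i \<in> A}) else \<infinity>)"
proof -
  have "(\<Sum>i. indicator A (x i) :: ennreal) = (\<integral>\<^sup>+i. indicator {i. x i \<in> A} i \<partial>count_space UNIV)"
    by (simp add: nn_integral_count_space_nat indicator_def)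
  also have "\<dots> = emeasure (count_space UNIV) {i. x i \<in> A}"
    by (simp del: nn_integral_indicator add: nn_integral_indicator)
  finally show ?thesis by (simp add: emeasure_count_space)
qed

lemma poisson_moment_sums:
  fixes l :: real
  shows "(\<lambda>k. l ^ k / fact k * exp (- l)) sums 1"
    and "(\<lambda>k. real k * (l ^ k / fact k * exp (- l))) sums l"
proof -
  have e: "(\<lambda>k. l ^ k / fact k) sums exp l" using exp_converges[of l] by (simp add: divide_inverse mult_ac scaleR_conv_of_real)
  show "(\<lambda>k. l ^ k / fact k * exp (- l)) sums 1"
    using sums_mult2[OF e, of "exp (-l)"] by (simp add: exp_minus)
  have "(\<lambda>n. l * (l ^ n / fact n * exp (- l))) sums (l * 1)"
    using sums_mult[OF \<open>(\<lambda>k. l ^ k / fact k * exp (- l)) sums 1\<close>, of l] .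
  moreover have "\<And>n. real (Suc n) * (l ^ Suc n / fact (Suc n) * exp (- l)) = l * (l ^ n / fact n * exp (- l))"
    unfolding fact_Suc power_Suc of_nat_mult by (simp add: field_simps del: of_nat_Suc)
  ultimately have "(\<lambda>n. real (Suc n) * (l ^ Suc n / fact (Suc n) * exp (- l))) sums l"
    by (simp only:) simp
  then show "(\<lambda>k. real k * (l ^ k / fact k * exp (- l))) sums l"
    by (subst (asm) sums_Suc_iff) simp
qed

lemma poisson_expect:
  assumes law: "poisson_process_law mu P" and A: "A \<in> sets borel" and fin: "emeasure mu A < \<infinity>"
  shows "(\<integral>\<^sup>+x. (\<Sum>i. indicator A (x i)) \<partial>P) = emeasure mu A"
proof -
  note pb = poisson_basic[OF law]
  interpret prob_space P by (rule pb(1))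
  define l where "l = measure mu A"
  have l0: "0 \<le> l" unfolding l_def by simp
  have muA: "emeasure mu A = ennreal l" unfolding l_def using fin by (simp add: emeasure_eq_ennreal_measure)
  have law_k: "\<And>k. measure P {x \<in> space P. finite {i. x i \<in> A} \<and> pcount A x = k} = l ^ k / fact k * exp (- l)"
    using law A fin unfolding poisson_process_law_def l_def by auto
  define F where "F x = (\<Sum>i. indicator A (x i) :: ennreal)" for x :: "nat \<Rightarrow> real"
  have Fm[measurable]: "F \<in> borel_measurable P"
    unfolding F_def using pb(4) A by measurable
  define E where "E k = {x \<in> space P. F x = of_nat k}" for k :: nat
  have Em[measurable]: "E k \<in> sets P" for k unfolding E_def by measurable
  have E_eq: "E k = {x \<in> space P. finite {i. x i \<in> A} \<and> pcount A x = k}" for k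
    unfolding E_def F_def suminf_indicator_eq pcount_def by auto
  have emE: "emeasure P (E k) = ennreal (l ^ k / fact k * exp (- l))" for k
    using law_k[of k] E_eq[of k] Em[of k] by (simp add: emeasure_eq_measure)
  have disj: "disjoint_family E" unfolding disjoint_family_on_def E_def by auto
  have "emeasure P (\<Union>k. E k) = (\<Sum>k. emeasure P (E k))"
    using disj by (intro suminf_emeasure[symmetric]) auto
  also have "\<dots> = ennreal 1"
    unfolding emE using poisson_moment_sums(1)[of l] l0
    by (subst suminf_ennreal2) (auto simp: sums_iff)
  finally have "measure P (\<Union>k. E k) = 1" by (simp add: measure_def)
  then have AEE: "AE x in P. x \<in> (\<Union>k. E k)" by (rule AE_prob_1)
  have "(\<integral>\<^sup>+x. F x \<partial>P) = (\<integral>\<^sup>+x. (\<Sum>k. of_nat k * indicator (E k) x) \<partial>P)"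
  proof (rule nn_integral_cong_AE)
    show "AE x in P. F x = (\<Sum>k. of_nat k * indicator (E k) x)"
      using AEE
    proof (rule AE_mp, intro AE_I2 impI)
      fix x assume "x \<in> (\<Union>k. E k)"
      then obtain k where k: "x \<in> E k" by auto
      then have Fx: "F x = of_nat k" unfolding E_def by auto
      have "(\<lambda>m. of_nat m * indicator (E m) x :: ennreal) = (\<lambda>m. if m = k then of_nat k else 0)"
        using k disj unfolding disjoint_family_on_def E_def by (auto simp: indicator_def)
      then show "F x = (\<Sum>k. of_nat k * indicator (E k) x)"
        using Fx sums_unique[OF sums_single[of k "\<lambda>_. of_nat k :: ennreal"]] by simp
    qed
  qed
  also have "\<dots> = (\<Sum>k. of_nat k * emeasure P (E k))"
    by (subst nn_integral_suminf) (auto simp: nn_integral_cmult_indicator)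
  also have "\<dots> = (\<Sum>k. ennreal (real k * (l ^ k / fact k * exp (- l))))"
    unfolding emE by (simp add: ennreal_mult'[symmetric] ennreal_of_nat_eq_real_of_nat)
  also have "\<dots> = ennreal l"
    using poisson_moment_sums(2)[of l] l0
    by (subst suminf_ennreal2) (auto simp: sums_iff)
  finally show ?thesis unfolding F_def muA .
qed


lemma poisson_sum_bound:
  fixes C :: "'t::countable \<Rightarrow> real set" and w :: "'t \<Rightarrow> real"
  assumes law: "poisson_process_law mu P"
    and C: "\<And>t. C t \<in> sets borel" "\<And>t. emeasure mu (C t) < \<infinity>"
    and cover: "\<And>r. ennreal r \<le> (\<integral>\<^sup>+t. ennreal (w t) * indicator (C t) r \<partial>count_space UNIV)"
    and fin: "(\<integral>\<^sup>+t. ennreal (w t) * emeasure mu (C t) \<partial>count_space UNIV) < \<infinity>"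
  shows "AE x in P. (\<Sum>i. ennreal (x i)) < \<infinity>"
proof -
  note pb = poisson_basic[OF law]
  have [measurable]: "\<And>i. (\<lambda>x. x i) \<in> measurable P borel" by (rule pb(4))
  have Cm[measurable]: "\<And>t. C t \<in> sets borel" by (rule C)
  have m1[measurable]: "\<And>t i. (\<lambda>x. ennreal (w t) * indicator (C t) (x i)) \<in> borel_measurable P"
    by measurable
  have m2[measurable]: "\<And>i. (\<lambda>x. \<integral>\<^sup>+t. ennreal (w t) * indicator (C t) (x i) \<partial>count_space UNIV) \<in> borel_measurable P"
    by (rule measurable_csum) simp
  have "(\<integral>\<^sup>+x. (\<Sum>i. ennreal (x i)) \<partial>P)
      \<le> (\<integral>\<^sup>+x. (\<Sum>i. \<integral>\<^sup>+t. ennreal (w t) * indicator (C t) (x i) \<partial>count_space UNIV) \<partial>P)"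
    by (intro nn_integral_mono suminf_le cover) auto
  also have "\<dots> = (\<Sum>i. \<integral>\<^sup>+x. \<integral>\<^sup>+t. ennreal (w t) * indicator (C t) (x i) \<partial>count_space UNIV \<partial>P)"
    by (rule nn_integral_suminf) simp
  also have "\<dots> = (\<Sum>i. \<integral>\<^sup>+t. \<integral>\<^sup>+x. ennreal (w t) * indicator (C t) (x i) \<partial>P \<partial>count_space UNIV)"
    by (intro suminf_cong nn_integral_count_space_nn_integral) auto
  also have "\<dots> = (\<integral>\<^sup>+i. \<integral>\<^sup>+t. \<integral>\<^sup>+x. ennreal (w t) * indicator (C t) (x i) \<partial>P \<partial>count_space UNIV \<partial>count_space UNIV)"
    by (rule nn_integral_count_space_nat[symmetric])
  also have "\<dots> = (\<integral>\<^sup>+t. \<integral>\<^sup>+i. \<integral>\<^sup>+x. ennreal (w t) * indicator (C t) (x i) \<partial>P \<partial>count_space UNIV \<partial>count_space UNIV)"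
    by (rule csum_swap)
  also have "\<dots> = (\<integral>\<^sup>+t. ennreal (w t) * emeasure mu (C t) \<partial>count_space UNIV)"
  proof (rule nn_integral_cong)
    fix t :: 't
    have "(\<integral>\<^sup>+i. \<integral>\<^sup>+x. ennreal (w t) * indicator (C t) (x i) \<partial>P \<partial>count_space UNIV)
        = (\<integral>\<^sup>+i. ennreal (w t) * \<integral>\<^sup>+x. indicator (C t) (x i) \<partial>P \<partial>count_space UNIV)"
      by (intro nn_integral_cong nn_integral_cmult) auto
    also have "\<dots> = ennreal (w t) * (\<Sum>i. \<integral>\<^sup>+x. indicator (C t) (x i) \<partial>P)"
      by (simp add: nn_integral_cmult nn_integral_count_space_nat)
    also have "(\<Sum>i. \<integral>\<^sup>+x. indicator (C t) (x i) \<partial>P) = (\<integral>\<^sup>+x. (\<Sum>i. indicator (C t) (x i)) \<partial>P)"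
      by (rule nn_integral_suminf[symmetric]) simp
    also have "\<dots> = emeasure mu (C t)"
      by (rule poisson_expect[OF law C(1) C(2)])
    finally show "(\<integral>\<^sup>+i. \<integral>\<^sup>+x. ennreal (w t) * indicator (C t) (x i) \<partial>P \<partial>count_space UNIV)
        = ennreal (w t) * emeasure mu (C t)" .
  qed
  finally have "(\<integral>\<^sup>+x. (\<Sum>i. ennreal (x i)) \<partial>P) \<noteq> \<infinity>" using fin by (auto simp: top_unique)
  then have "AE x in P. (\<Sum>i. ennreal (x i)) \<noteq> \<infinity>"
    by (intro nn_integral_noteq_infinite) measurable
  then show ?thesis by (simp add: less_top)
qed

lemma poisson_pos:
  assumes law: "poisson_process_law mu P" and mu0: "emeasure mu {..0} = 0"
  shows "AE x in P. \<forall>i. 0 < x i"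
proof -
  note pb = poisson_basic[OF law]
  interpret prob_space P by (rule pb(1))
  have "measure mu {..0} = 0" using mu0 by (simp add: measure_def)
  then have "measure P {x \<in> space P. finite {i. x i \<in> {..0}} \<and> pcount {..0} x = 0} = 1"
  proof -
    have "\<forall>A k. A \<in> sets borel \<and> emeasure mu A < \<infinity> \<longrightarrow>
        measure P {x \<in> space P. finite {i. x i \<in> A} \<and> pcount A x = k}
          = measure mu A ^ k / fact k * exp (- measure mu A)"
      using law unfolding poisson_process_law_def by blast
    then have "measure P {x \<in> space P. finite {i. x i \<in> {..0::real}} \<and> pcount {..0} x = 0}
          = measure mu {..0} ^ 0 / fact 0 * exp (- measure mu {..0})"
    proof -
      have "{..0::real} \<in> sets borel" "emeasure mu {..0} < \<infinity>" using mu0 by auto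
      then show ?thesis using \<open>\<forall>A k. _\<close> by blast
    qed
    then show ?thesis using \<open>measure mu {..0} = 0\<close> by simp
  qed
  then have "AE x in P. x \<in> {x \<in> space P. finite {i. x i \<in> {..0}} \<and> pcount {..0} x = 0}"
    by (rule AE_prob_1)
  then show ?thesis
  proof (rule AE_mp, intro AE_I2 impI)
    fix x assume "x \<in> {x \<in> space P. finite {i. x i \<in> {..0::real}} \<and> pcount {..0} x = 0}"
    then have "{i. x i \<in> {..0}} = {}" unfolding pcount_def by auto
    then show "\<forall>i. 0 < x i" by (auto simp: not_le[symmetric])
  qed
qed




lemma gpi_emeasure:
  assumes A: "A \<in> sets borel"
  shows "emeasure (gamma_process_intensity g0 c) A
       = (\<integral>\<^sup>+r. ennreal (if 0 < r then g0 / r * exp (- c * r) else 0) * indicator A r \<partial>lborel)"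
  unfolding gamma_process_intensity_def using A by (subst emeasure_density) auto

lemma gpi_nonpos: "emeasure (gamma_process_intensity g0 c) {..0} = 0"
  unfolding gpi_emeasure[OF atMost_borel]
  by (subst nn_integral_cong[where v="\<lambda>_. 0"]) (auto simp: indicator_def)

lemma gpi_bound:
  assumes ab: "a \<le> b" and K: "\<And>r. a < r \<Longrightarrow> r \<le> b \<Longrightarrow> (if 0 < r then g0 / r * exp (- c * r) else 0) \<le> K"
  shows "emeasure (gamma_process_intensity g0 c) {a<..b} \<le> ennreal K * ennreal (b - a)"
proof -
  have "emeasure (gamma_process_intensity g0 c) {a<..b}
      = (\<integral>\<^sup>+r. ennreal (if 0 < r then g0 / r * exp (- c * r) else 0) * indicator {a<..b} r \<partial>lborel)"
    by (rule gpi_emeasure) simp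
  also have "\<dots> \<le> (\<integral>\<^sup>+r. ennreal K * indicator {a<..b} r \<partial>lborel)"
  proof (intro nn_integral_mono)
    fix r :: real
    show "ennreal (if 0 < r then g0 / r * exp (- c * r) else 0) * indicator {a<..b} r \<le> ennreal K * indicator {a<..b} r"
    proof (cases "r \<in> {a<..b}")
      case True
      then have "ennreal (if 0 < r then g0 / r * exp (- c * r) else 0) \<le> ennreal K"
        by (intro ennreal_leI K) auto
      then show ?thesis using True by simp
    qed simp
  qed
  also have "\<dots> = ennreal K * ennreal (b - a)"
    using ab by (simp add: nn_integral_cmult_indicator)
  finally show ?thesis .
qed

lemma le_csum: "f t0 \<le> (\<integral>\<^sup>+t. f t \<partial>count_space UNIV)"
proof -
  have "f t0 = (\<integral>\<^sup>+t. f t * indicator {t0} t \<partial>count_space UNIV)"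
    by (simp add: nn_integral_indicator_singleton)
  also have "\<dots> \<le> (\<integral>\<^sup>+t. f t \<partial>count_space UNIV)"
    by (intro nn_integral_mono) (auto simp: indicator_def)
  finally show ?thesis .
qed

definition CC :: "bool \<times> nat \<Rightarrow> real set" where
  "CC t = (if fst t then {real (snd t) + 1 <.. real (snd t) + 2}
           else {(1/2) ^ Suc (snd t) <.. (1/2) ^ snd t})"

definition WW :: "bool \<times> nat \<Rightarrow> real" where
  "WW t = (if fst t then real (snd t) + 2 else (1/2) ^ snd t)"

lemma CC_borel: "CC t \<in> sets borel"
  unfolding CC_def by auto

lemma CC_cover: "ennreal r \<le> (\<integral>\<^sup>+t. ennreal (WW t) * indicator (CC t) r \<partial>count_space UNIV)"
proof (cases "r \<le> 0")
  case True then show ?thesis by (simp add: ennreal_neg)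
next
  case False
  then have r: "0 < r" by simp
  have "\<exists>t. r \<le> WW t \<and> r \<in> CC t"
  proof (cases "r \<le> 1")
    case True
    obtain m where m: "(1/2::real) ^ m < r" using real_arch_pow_inv[OF r, of "1/2"] by auto
    define m0 where "m0 = (LEAST m. (1/2::real) ^ m < r)"
    have m0: "(1/2::real) ^ m0 < r" unfolding m0_def by (rule LeastI[of _ m], rule m)
    have "m0 \<noteq> 0" using m0 True by (cases "m0 = 0") auto
    then obtain n where n: "m0 = Suc n" by (cases m0) auto
    have "\<not> (1/2::real) ^ n < r" unfolding m0_def
      by (rule not_less_Least) (use n m0_def in auto)
    then have "r \<le> WW (False, n) \<and> r \<in> CC (False, n)" using m0 n unfolding WW_def CC_def by auto
    then show ?thesis by blast
  next
    case False
    define n where "n = nat (ceiling r - 2)"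
    have c1: "r \<le> of_int (ceiling r)" by (rule le_of_int_ceiling)
    have c2: "of_int (ceiling r) < r + 1" using ceiling_correct[of r] by linarith
    have "ceiling r \<ge> 2" using False by (simp add: le_ceiling_iff)
    then have "int n = ceiling r - 2" unfolding n_def by simp
    then have "real n + 2 = of_int (ceiling r)"
      by (metis add_diff_cancel_left' diff_add_cancel of_int_diff of_int_numeral of_int_of_nat_eq)
    then have "r \<le> WW (True, n) \<and> r \<in> CC (True, n)" using c1 c2 unfolding WW_def CC_def by auto
    then show ?thesis by blast
  qed
  then obtain t where t: "r \<le> WW t" "r \<in> CC t" by blast
  have "ennreal r \<le> ennreal (WW t) * indicator (CC t) r" using t by (auto intro: ennreal_leI)
  also have "\<dots> \<le> (\<integral>\<^sup>+t. ennreal (WW t) * indicator (CC t) r \<partial>count_space UNIV)"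
    by (rule le_csum[of "\<lambda>t. ennreal (WW t) * indicator (CC t) r"])
  finally show ?thesis .
qed




definition BB :: "real \<Rightarrow> real \<Rightarrow> bool \<times> nat \<Rightarrow> real" where
  "BB g0 c t = (if fst t then g0 * (2 / c) * exp (- c / 2) ^ snd t else g0 * (1/2) ^ snd t)"

lemma exp_lin_bound:
  fixes c :: real assumes c: "0 < c"
  shows "(real n + 2) * exp (- c * (real n + 1)) \<le> (2 / c) * exp (- c / 2) ^ n"
proof -
  define y where "y = c * (real n + 2) / 2"
  have y: "y \<le> exp y" using exp_ge_add_one_self[of y] by linarith
  have "real n + 2 = (2 / c) * y" unfolding y_def using c by simp
  also have "\<dots> \<le> (2 / c) * exp y" using y c by (intro mult_left_mono) auto
  finally have "(real n + 2) * exp (- c * (real n + 1)) \<le> (2 / c) * exp y * exp (- c * (real n + 1))"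
    by (intro mult_right_mono) auto
  also have "\<dots> = (2 / c) * exp (y - c * (real n + 1))" by (simp add: exp_diff exp_minus divide_inverse)
  also have "y - c * (real n + 1) = real n * (- c / 2)" unfolding y_def by (simp add: field_simps)
  also have "exp (real n * (- c / 2)) = exp (- c / 2) ^ n" by (rule exp_of_nat_mult)
  finally show ?thesis .
qed

lemma CC_bound:
  assumes g0: "0 < g0" and c: "0 < c"
  shows "ennreal (WW t) * emeasure (gamma_process_intensity g0 c) (CC t) \<le> ennreal (BB g0 c t)"
    and "emeasure (gamma_process_intensity g0 c) (CC t) < \<infinity>"
proof -
  obtain b n where t: "t = (b, n)" by (cases t)
  have "emeasure (gamma_process_intensity g0 c) (CC t) \<le> ennreal (if b then g0 * exp (- c * (real n + 1)) else g0)
      \<and> ennreal (WW t) * emeasure (gamma_process_intensity g0 c) (CC t) \<le> ennreal (BB g0 c t)"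
  proof (cases b)
    case False
    define a :: real where "a = (1/2) ^ Suc n"
    have a: "0 < a" unfolding a_def by simp
    have ab: "a \<le> (1/2) ^ n" "(1/2) ^ n - a = a" unfolding a_def by auto
    have "emeasure (gamma_process_intensity g0 c) {a<..(1/2)^n} \<le> ennreal (g0 / a) * ennreal ((1/2)^n - a)"
    proof (rule gpi_bound[OF ab(1)])
      fix r :: real assume r: "a < r" "r \<le> (1/2)^n"
      have "g0 / r * exp (- c * r) \<le> g0 / r * 1"
        using r a g0 c by (intro mult_left_mono) auto
      also have "\<dots> \<le> g0 / a" using r a g0 by (simp add: frac_le)
      finally show "(if 0 < r then g0 / r * exp (- c * r) else 0) \<le> g0 / a" using a g0 by auto
    qed
    also have "ennreal (g0 / a) * ennreal ((1/2)^n - a) = ennreal g0"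
      using a g0 ab(2) by (simp add: ennreal_mult'[symmetric])
    finally have E: "emeasure (gamma_process_intensity g0 c) (CC t) \<le> ennreal g0"
      using False t unfolding CC_def a_def by simp
    have "ennreal (WW t) * emeasure (gamma_process_intensity g0 c) (CC t) \<le> ennreal (WW t) * ennreal g0"
      using E by (rule mult_left_mono) simp
    also have "\<dots> = ennreal (BB g0 c t)"
      using False t g0 unfolding WW_def BB_def by (simp add: ennreal_mult'[symmetric] mult.commute)
    finally show ?thesis using E False by simp
  next
    case True
    have "emeasure (gamma_process_intensity g0 c) {real n + 1<..real n + 2} \<le> ennreal (g0 * exp (- c * (real n + 1))) * ennreal ((real n + 2) - (real n + 1))"
    proof (rule gpi_bound)
      fix r :: real assume r: "real n + 1 < r" "r \<le> real n + 2"
      have "g0 / r * exp (- c * r) \<le> g0 * exp (- c * (real n + 1))"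
      proof (rule mult_mono)
        show "g0 / r \<le> g0" using r g0 by (simp add: divide_le_eq)
        show "exp (- c * r) \<le> exp (- c * (real n + 1))" using r c by simp
      qed (use g0 in auto)
      then show "(if 0 < r then g0 / r * exp (- c * r) else 0) \<le> g0 * exp (- c * (real n + 1))"
        using g0 by auto
    qed simp
    then have E: "emeasure (gamma_process_intensity g0 c) (CC t) \<le> ennreal (g0 * exp (- c * (real n + 1)))"
      using True t unfolding CC_def by simp
    have "ennreal (WW t) * emeasure (gamma_process_intensity g0 c) (CC t) \<le> ennreal (WW t) * ennreal (g0 * exp (- c * (real n + 1)))"
      using E by (rule mult_left_mono) simp
    also have "\<dots> = ennreal (g0 * ((real n + 2) * exp (- c * (real n + 1))))"
    proof -
      have w: "WW t = real n + 2" using True t by (simp add: WW_def)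
      show ?thesis unfolding w by (subst ennreal_mult'[symmetric]) (simp_all add: mult_ac)
    qed
    also have "\<dots> \<le> ennreal (g0 * ((2 / c) * exp (- c / 2) ^ n))"
      using exp_lin_bound[OF c, of n] g0 by (intro ennreal_leI mult_left_mono) auto
    also have "\<dots> = ennreal (BB g0 c t)"
      using True t unfolding BB_def by (simp add: mult_ac)
    finally show ?thesis using E True by simp
  qed
  then show "ennreal (WW t) * emeasure (gamma_process_intensity g0 c) (CC t) \<le> ennreal (BB g0 c t)"
    and "emeasure (gamma_process_intensity g0 c) (CC t) < \<infinity>"
    by (auto dest: le_less_trans[OF _ ennreal_less_top])
qed

lemma CC_fin:
  assumes g0: "0 < g0" and c: "0 < c"
  shows "(\<integral>\<^sup>+t. ennreal (WW t) * emeasure (gamma_process_intensity g0 c) (CC t) \<partial>count_space UNIV) < \<infinity>"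
proof -
  have "(\<integral>\<^sup>+t. ennreal (WW t) * emeasure (gamma_process_intensity g0 c) (CC t) \<partial>count_space UNIV)
      \<le> (\<integral>\<^sup>+t. ennreal (BB g0 c t) \<partial>count_space UNIV)"
    by (intro nn_integral_mono CC_bound[OF g0 c])
  also have "\<dots> = (\<integral>\<^sup>+b. \<integral>\<^sup>+n. ennreal (BB g0 c (b, n)) \<partial>count_space UNIV \<partial>count_space UNIV)"
    by (rule nn_integral_fst_count_space[symmetric])
  also have "\<dots> = (\<Sum>n. ennreal (BB g0 c (False, n))) + (\<Sum>n. ennreal (BB g0 c (True, n)))"
    by (simp add: nn_integral_count_space_finite UNIV_bool nn_integral_count_space_nat)
  also have "\<dots> < \<infinity>"
  proof -
    have q: "exp (- c / 2) < 1" using c by simp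
    have s1: "summable (\<lambda>n. BB g0 c (False, n))"
      unfolding BB_def by (auto intro!: summable_mult summable_geometric)
    have s2: "summable (\<lambda>n. BB g0 c (True, n))"
      unfolding BB_def using q by (auto intro!: summable_mult summable_geometric)
    have nn: "\<And>t. 0 \<le> BB g0 c t" unfolding BB_def using g0 c by auto
    show ?thesis
      using ennreal_suminf_neq_top[OF s1 nn] ennreal_suminf_neq_top[OF s2 nn]
      by (simp add: less_top)
  qed
  finally show ?thesis .
qed




lemma product_prob_spaceI': "(\<And>i. prob_space (M i)) \<Longrightarrow> product_prob_space M"
  unfolding product_prob_space_def product_prob_space_axioms_def product_sigma_finite_def
  by (auto intro: prob_space_imp_sigma_finite)

lemma cs_pair_prod:
  fixes a :: "'i::countable \<Rightarrow> ennreal" and b :: "'k::countable \<Rightarrow> ennreal"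
  shows "(\<integral>\<^sup>+t. a (fst t) * b (snd t) \<partial>count_space UNIV)
       = (\<integral>\<^sup>+i. a i \<partial>count_space UNIV) * (\<integral>\<^sup>+k. b k \<partial>count_space UNIV)"
proof -
  have "(\<integral>\<^sup>+t. a (fst t) * b (snd t) \<partial>count_space UNIV)
      = (\<integral>\<^sup>+i. \<integral>\<^sup>+k. a i * b k \<partial>count_space UNIV \<partial>count_space UNIV)"
    using nn_integral_fst_count_space[of "\<lambda>t. a (fst t) * b (snd t)"] by simp
  also have "\<dots> = (\<integral>\<^sup>+i. a i * (\<integral>\<^sup>+k. b k \<partial>count_space UNIV) \<partial>count_space UNIV)"
    by (intro nn_integral_cong nn_integral_cmult) auto
  also have "\<dots> = (\<integral>\<^sup>+i. a i \<partial>count_space UNIV) * (\<integral>\<^sup>+k. b k \<partial>count_space UNIV)"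
    by (rule nn_integral_multc) auto
  finally show ?thesis .
qed

lemma cs_triple_prod:
  fixes g :: "nat \<times> nat \<Rightarrow> ennreal" and h :: "nat \<Rightarrow> ennreal"
  shows "(\<integral>\<^sup>+t. g (fst t, snd (snd t)) * h (fst (snd t)) \<partial>count_space UNIV)
       = (\<integral>\<^sup>+t. g t \<partial>count_space UNIV) * (\<integral>\<^sup>+j. h j \<partial>count_space UNIV)"
proof -
  have "(\<integral>\<^sup>+t. g (fst t, snd (snd t)) * h (fst (snd t)) \<partial>count_space UNIV)
      = (\<integral>\<^sup>+i. \<integral>\<^sup>+jk. g (i, snd jk) * h (fst jk) \<partial>count_space UNIV \<partial>count_space UNIV)"
    using nn_integral_fst_count_space[of "\<lambda>t. g (fst t, snd (snd t)) * h (fst (snd t))"] by simp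
  also have "\<dots> = (\<integral>\<^sup>+i. \<integral>\<^sup>+j. \<integral>\<^sup>+k. g (i, k) * h j \<partial>count_space UNIV \<partial>count_space UNIV \<partial>count_space UNIV)"
    using nn_integral_fst_count_space[of "\<lambda>jk. g (_, snd jk) * h (fst jk)"]
    by (intro nn_integral_cong) (simp add: nn_integral_fst_count_space[symmetric])
  also have "\<dots> = (\<integral>\<^sup>+i. \<integral>\<^sup>+k. \<integral>\<^sup>+j. g (i, k) * h j \<partial>count_space UNIV \<partial>count_space UNIV \<partial>count_space UNIV)"
    by (intro nn_integral_cong csum_swap)
  also have "\<dots> = (\<integral>\<^sup>+i. \<integral>\<^sup>+k. g (i, k) * (\<integral>\<^sup>+j. h j \<partial>count_space UNIV) \<partial>count_space UNIV \<partial>count_space UNIV)"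
    by (intro nn_integral_cong nn_integral_cmult) auto
  also have "\<dots> = (\<integral>\<^sup>+i. \<integral>\<^sup>+k. g (i, k) \<partial>count_space UNIV \<partial>count_space UNIV) * (\<integral>\<^sup>+j. h j \<partial>count_space UNIV)"
    by (simp add: nn_integral_multc)
  also have "(\<integral>\<^sup>+i. \<integral>\<^sup>+k. g (i, k) \<partial>count_space UNIV \<partial>count_space UNIV) = (\<integral>\<^sup>+t. g t \<partial>count_space UNIV)"
    by (rule nn_integral_fst_count_space)
  finally show ?thesis .
qed




definition cnt :: "(nat \<times> nat \<times> nat \<Rightarrow> bool) \<Rightarrow> ennreal" where
  "cnt z = (\<integral>\<^sup>+t. (if z t then 1 else 0) \<partial>count_space UNIV)"

lemma cnt_measurable[measurable]:
  "cnt \<in> borel_measurable (PiM UNIV (\<lambda>_. count_space UNIV))"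
  unfolding cnt_def
proof (rule measurable_csum)
  fix t :: "nat \<times> nat \<times> nat"
  have "(\<lambda>z. z t) \<in> measurable (PiM UNIV (\<lambda>_. count_space UNIV)) (count_space UNIV)"
    by (rule measurable_component_singleton) simp
  then show "(\<lambda>z::nat \<times> nat \<times> nat \<Rightarrow> bool. if z t then 1 else 0 :: ennreal) \<in> borel_measurable (PiM UNIV (\<lambda>_. count_space UNIV))"
    by (rule measurable_compose[where g="\<lambda>b. if b then 1 else 0"]) simp
qed

lemma cnt_finite: "cnt z < \<infinity> \<Longrightarrow> finite {t. z t}"
proof -
  assume "cnt z < \<infinity>"
  moreover have "cnt z = emeasure (count_space UNIV) {t. z t}"
  proof -
    have "cnt z = (\<integral>\<^sup>+t. indicator {t. z t} t \<partial>count_space UNIV)"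
      unfolding cnt_def by (intro nn_integral_cong) (auto simp: indicator_def)
    also have "\<dots> = emeasure (count_space UNIV) {t. z t}"
      by (rule nn_integral_indicator) simp
    finally show ?thesis .
  qed
  ultimately show ?thesis by (auto simp: emeasure_count_space split: if_splits)
qed

lemma bern_level:
  fixes p :: "nat \<times> nat \<times> nat \<Rightarrow> real"
  assumes fin: "(\<integral>\<^sup>+t. ennreal (p t) \<partial>count_space UNIV) < \<infinity>"
  shows "AE z in PiM UNIV (\<lambda>t. bernoulli_measure (p t)). cnt z < \<infinity>"
proof -
  let ?M = "PiM UNIV (\<lambda>t. bernoulli_measure (p t))"
  have pps: "product_prob_space (\<lambda>t. bernoulli_measure (p t))"
    by (rule product_prob_spaceI') (simp add: bernoulli_measure_def prob_space_measure_pmf)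
  have sets_eq: "sets ?M = sets (PiM UNIV (\<lambda>_. count_space UNIV :: bool measure))"
    by (rule sets_PiM_cong) (auto simp: bernoulli_measure_def)
  have cm[measurable]: "cnt \<in> borel_measurable ?M"
    using measurable_cong_sets[OF sets_eq refl] cnt_measurable by blast
  have comp[measurable]: "\<And>t. (\<lambda>z. if z t then 1 else 0 :: ennreal) \<in> borel_measurable ?M"
  proof -
    fix t
    have "(\<lambda>z. z t) \<in> measurable ?M (count_space UNIV)"
      using measurable_component_singleton[of t UNIV "\<lambda>t. bernoulli_measure (p t)"]
      by (simp add: bernoulli_measure_def)
    then show "(\<lambda>z. if z t then 1 else 0 :: ennreal) \<in> borel_measurable ?M"
      by (rule measurable_compose[where g="\<lambda>b. if b then 1 else 0"]) simp
  qed
  have "(\<integral>\<^sup>+z. cnt z \<partial>?M) = (\<integral>\<^sup>+t. \<integral>\<^sup>+z. (if z t then 1 else 0) \<partial>?M \<partial>count_space UNIV)"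
    unfolding cnt_def by (rule nn_integral_count_space_nn_integral) auto
  also have "\<dots> = (\<integral>\<^sup>+t. ennreal (pmf (bernoulli_pmf (p t)) True) \<partial>count_space UNIV)"
  proof (rule nn_integral_cong)
    fix t
    have "(\<integral>\<^sup>+z. (if z t then 1 else 0) \<partial>?M) = (\<integral>\<^sup>+b. (if b then 1 else 0) \<partial>bernoulli_measure (p t))"
      by (rule nn_integral_PiM_comp[OF pps, of t UNIV "\<lambda>b. if b then 1 else 0"]) (auto simp: bernoulli_measure_def)
    also have "\<dots> = (\<integral>\<^sup>+b. indicator {True} b \<partial>measure_pmf (bernoulli_pmf (p t)))"
      unfolding bernoulli_measure_def by (intro nn_integral_cong) (auto simp: indicator_def)
    also have "\<dots> = ennreal (pmf (bernoulli_pmf (p t)) True)"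
      by (simp add: emeasure_pmf_single)
    finally show "(\<integral>\<^sup>+z. (if z t then 1 else 0) \<partial>?M) = ennreal (pmf (bernoulli_pmf (p t)) True)" .
  qed
  also have "\<dots> \<le> (\<integral>\<^sup>+t. ennreal (p t) \<partial>count_space UNIV)"
    by (intro nn_integral_mono pmf_bernoulli_True_le)
  finally have "(\<integral>\<^sup>+z. cnt z \<partial>?M) \<noteq> \<infinity>" using fin by (auto simp: top_unique)
  then have "AE z in ?M. cnt z \<noteq> \<infinity>" by (intro nn_integral_noteq_infinite) measurable
  then show ?thesis by (simp add: less_top)
qed




lemma ennreal_abs_mult3: "ennreal \<bar>a * b * c\<bar> = ennreal \<bar>a\<bar> * ennreal \<bar>b\<bar> * ennreal \<bar>c\<bar>"
  by (simp add: abs_mult ennreal_mult)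

lemma comp_meas_gamma:
  fixes a :: "'i \<Rightarrow> real"
  shows "(\<lambda>\<omega>. ennreal \<bar>\<omega> t\<bar>) \<in> borel_measurable (PiM UNIV (\<lambda>t. gamma_measure (a t) s))"
proof -
  have "(\<lambda>\<omega>. \<omega> t) \<in> measurable (PiM UNIV (\<lambda>t. gamma_measure (a t) s)) (gamma_measure (a t) s)"
    by (rule measurable_component_singleton) simp
  then have "(\<lambda>\<omega>. \<omega> t) \<in> measurable (PiM UNIV (\<lambda>t. gamma_measure (a t) s)) borel"
    by (simp only: measurable_cong_sets[OF refl sets_gamma_measure])
  then show ?thesis by measurable
qed

lemma gamma_level:
  fixes a :: "'i::countable \<Rightarrow> real" and W :: "'j::countable \<Rightarrow> ennreal" and idx :: "'j \<Rightarrow> 'i"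
  assumes s: "0 < s"
  shows "(\<integral>\<^sup>+\<omega>. (\<integral>\<^sup>+u. W u * ennreal \<bar>\<omega> (idx u)\<bar> \<partial>count_space UNIV) \<partial>PiM UNIV (\<lambda>t. gamma_measure (a t) s))
       = (\<integral>\<^sup>+u. W u * (ennreal (a (idx u)) * ennreal s) \<partial>count_space UNIV)"
proof -
  let ?M = "PiM UNIV (\<lambda>t. gamma_measure (a t) s)"
  have pps: "product_prob_space (\<lambda>t. gamma_measure (a t) s)"
    by (rule product_prob_spaceI') (rule prob_space_gamma_measure)
  have [measurable]: "\<And>t. (\<lambda>\<omega>. ennreal \<bar>\<omega> t\<bar>) \<in> borel_measurable ?M" by (rule comp_meas_gamma)
  have "(\<integral>\<^sup>+\<omega>. (\<integral>\<^sup>+u. W u * ennreal \<bar>\<omega> (idx u)\<bar> \<partial>count_space UNIV) \<partial>?M)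
      = (\<integral>\<^sup>+u. \<integral>\<^sup>+\<omega>. W u * ennreal \<bar>\<omega> (idx u)\<bar> \<partial>?M \<partial>count_space UNIV)"
    by (rule nn_integral_count_space_nn_integral) (auto intro!: borel_measurable_times_ennreal)
  also have "\<dots> = (\<integral>\<^sup>+u. W u * (ennreal (a (idx u)) * ennreal s) \<partial>count_space UNIV)"
  proof (rule nn_integral_cong)
    fix u
    have "(\<integral>\<^sup>+\<omega>. W u * ennreal \<bar>\<omega> (idx u)\<bar> \<partial>?M) = W u * (\<integral>\<^sup>+\<omega>. ennreal \<bar>\<omega> (idx u)\<bar> \<partial>?M)"
      by (rule nn_integral_cmult) (rule comp_meas_gamma)
    also have "(\<integral>\<^sup>+\<omega>. ennreal \<bar>\<omega> (idx u)\<bar> \<partial>?M) = (\<integral>\<^sup>+x. ennreal \<bar>x\<bar> \<partial>gamma_measure (a (idx u)) s)"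
      by (rule nn_integral_PiM_comp[OF pps, of "idx u" UNIV "\<lambda>x. ennreal \<bar>x\<bar>"]) (simp_all only: measurable_cong_sets[OF sets_gamma_measure refl] UNIV_I, measurable)
    also have "\<dots> = ennreal (a (idx u)) * ennreal s" by (rule gamma_measure_mean[OF s])
    finally show "(\<integral>\<^sup>+\<omega>. W u * ennreal \<bar>\<omega> (idx u)\<bar> \<partial>?M) = W u * (ennreal (a (idx u)) * ennreal s)" .
  qed
  finally show ?thesis .
qed




lemma theta_level:
  fixes rho r :: "nat \<Rightarrow> real" and e :: real
  assumes e: "0 < e"
    and Sr: "(\<integral>\<^sup>+k. ennreal \<bar>r k\<bar> \<partial>count_space UNIV) < \<infinity>"
    and Srho: "(\<integral>\<^sup>+i. ennreal (rho i) \<partial>count_space UNIV) < \<infinity>"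
  shows "AE \<theta> in PiM UNIV (\<lambda>(i, k). gamma_measure (rho i) (1 / e)).
           (\<integral>\<^sup>+t. ennreal \<bar>r (snd t)\<bar> * ennreal \<bar>\<theta> t\<bar> \<partial>count_space UNIV) < \<infinity>"
proof -
  have Meq: "(\<lambda>(i, k). gamma_measure (rho i) (1 / e)) = (\<lambda>t. gamma_measure (rho (fst t)) (1 / e))"
    by (auto simp: fun_eq_iff)
  let ?M = "PiM UNIV (\<lambda>t::nat\<times>nat. gamma_measure (rho (fst t)) (1 / e))"
  have [measurable]: "\<And>t. (\<lambda>\<omega>. ennreal \<bar>\<omega> t\<bar>) \<in> borel_measurable ?M" by (rule comp_meas_gamma)
  have Qm: "(\<lambda>\<theta>. \<integral>\<^sup>+t. ennreal \<bar>r (snd t)\<bar> * ennreal \<bar>\<theta> t\<bar> \<partial>count_space UNIV) \<in> borel_measurable ?M"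
    by (rule measurable_csum) measurable
  have "(\<integral>\<^sup>+\<theta>. (\<integral>\<^sup>+t. ennreal \<bar>r (snd t)\<bar> * ennreal \<bar>\<theta> ((\<lambda>t. t) t)\<bar> \<partial>count_space UNIV) \<partial>?M)
      = (\<integral>\<^sup>+t. ennreal \<bar>r (snd t)\<bar> * (ennreal (rho (fst ((\<lambda>t. t) t))) * ennreal (1 / e)) \<partial>count_space UNIV)"
    using e by (intro gamma_level[where a="\<lambda>t. rho (fst t)"]) simp
  also have "\<dots> = (\<integral>\<^sup>+t. (ennreal (rho (fst t)) * ennreal (1 / e)) * ennreal \<bar>r (snd t)\<bar> \<partial>count_space UNIV)"
    by (simp add: mult_ac)
  also have "\<dots> = (\<integral>\<^sup>+i. ennreal (rho i) * ennreal (1 / e) \<partial>count_space UNIV) * (\<integral>\<^sup>+k. ennreal \<bar>r k\<bar> \<partial>count_space UNIV)"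
    by (rule cs_pair_prod)
  also have "\<dots> = (\<integral>\<^sup>+i. ennreal (rho i) \<partial>count_space UNIV) * ennreal (1 / e) * (\<integral>\<^sup>+k. ennreal \<bar>r k\<bar> \<partial>count_space UNIV)"
    by (simp add: nn_integral_multc)
  also have "\<dots> < \<infinity>" using Sr Srho by (simp add: ennreal_mult_less_top)
  finally have "(\<integral>\<^sup>+\<theta>. (\<integral>\<^sup>+t. ennreal \<bar>r (snd t)\<bar> * ennreal \<bar>\<theta> t\<bar> \<partial>count_space UNIV) \<partial>?M) \<noteq> \<infinity>"
    by simp
  then have "AE \<theta> in ?M. (\<integral>\<^sup>+t. ennreal \<bar>r (snd t)\<bar> * ennreal \<bar>\<theta> t\<bar> \<partial>count_space UNIV) \<noteq> \<infinity>"
    by (intro nn_integral_noteq_infinite Qm)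
  then show ?thesis unfolding Meq by (simp add: less_top)
qed

lemma psi_level:
  fixes tau r :: "nat \<Rightarrow> real" and \<theta> :: "nat \<times> nat \<Rightarrow> real" and f :: real
  assumes f: "0 < f"
    and T: "(\<integral>\<^sup>+t. ennreal \<bar>r (snd t)\<bar> * ennreal \<bar>\<theta> t\<bar> \<partial>count_space UNIV) < \<infinity>"
    and St: "(\<integral>\<^sup>+j. ennreal (tau j) \<partial>count_space UNIV) < \<infinity>"
  shows "AE \<psi> in PiM UNIV (\<lambda>(j, k). gamma_measure (tau j) (1 / f)).
           (\<integral>\<^sup>+u. ennreal ((\<lambda>(i, j, k). 1 - exp (- (r k * \<theta> (i, k) * \<psi> (j, k)))) u) \<partial>count_space UNIV) < \<infinity>"
proof -
  have Meq: "(\<lambda>(j, k). gamma_measure (tau j) (1 / f)) = (\<lambda>t. gamma_measure (tau (fst t)) (1 / f))"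
    by (auto simp: fun_eq_iff)
  let ?M = "PiM UNIV (\<lambda>t::nat\<times>nat. gamma_measure (tau (fst t)) (1 / f))"
  let ?W = "\<lambda>u::nat\<times>nat\<times>nat. ennreal \<bar>r (snd (snd u))\<bar> * ennreal \<bar>\<theta> (fst u, snd (snd u))\<bar>"
  let ?idx = "\<lambda>u::nat\<times>nat\<times>nat. (fst (snd u), snd (snd u))"
  have [measurable]: "\<And>t. (\<lambda>\<omega>. ennreal \<bar>\<omega> t\<bar>) \<in> borel_measurable ?M" by (rule comp_meas_gamma)
  have Qm: "(\<lambda>\<psi>. \<integral>\<^sup>+u. ?W u * ennreal \<bar>\<psi> (?idx u)\<bar> \<partial>count_space UNIV) \<in> borel_measurable ?M"
    by (rule measurable_csum) measurable
  have "(\<integral>\<^sup>+\<psi>. (\<integral>\<^sup>+u. ?W u * ennreal \<bar>\<psi> (?idx u)\<bar> \<partial>count_space UNIV) \<partial>?M)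
      = (\<integral>\<^sup>+u. ?W u * (ennreal (tau (fst (?idx u))) * ennreal (1 / f)) \<partial>count_space UNIV)"
    using f by (intro gamma_level[where a="\<lambda>t. tau (fst t)"]) simp
  also have "\<dots> = (\<integral>\<^sup>+u. (\<lambda>ik. ennreal \<bar>r (snd ik)\<bar> * ennreal \<bar>\<theta> ik\<bar>) (fst u, snd (snd u))
                          * (\<lambda>j. ennreal (tau j) * ennreal (1 / f)) (fst (snd u)) \<partial>count_space UNIV)"
    by simp
  also have "\<dots> = (\<integral>\<^sup>+t. ennreal \<bar>r (snd t)\<bar> * ennreal \<bar>\<theta> t\<bar> \<partial>count_space UNIV)
                 * (\<integral>\<^sup>+j. ennreal (tau j) * ennreal (1 / f) \<partial>count_space UNIV)"
    by (rule cs_triple_prod)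
  also have "\<dots> = (\<integral>\<^sup>+t. ennreal \<bar>r (snd t)\<bar> * ennreal \<bar>\<theta> t\<bar> \<partial>count_space UNIV)
                 * ((\<integral>\<^sup>+j. ennreal (tau j) \<partial>count_space UNIV) * ennreal (1 / f))"
    by (simp add: nn_integral_multc)
  also have "\<dots> < \<infinity>" using T St by (simp add: ennreal_mult_less_top)
  finally have "(\<integral>\<^sup>+\<psi>. (\<integral>\<^sup>+u. ?W u * ennreal \<bar>\<psi> (?idx u)\<bar> \<partial>count_space UNIV) \<partial>?M) \<noteq> \<infinity>"
    by simp
  then have AE1: "AE \<psi> in ?M. (\<integral>\<^sup>+u. ?W u * ennreal \<bar>\<psi> (?idx u)\<bar> \<partial>count_space UNIV) \<noteq> \<infinity>"
    by (intro nn_integral_noteq_infinite Qm)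
  have "AE \<psi> in ?M. (\<integral>\<^sup>+u. ennreal ((\<lambda>(i, j, k). 1 - exp (- (r k * \<theta> (i, k) * \<psi> (j, k)))) u) \<partial>count_space UNIV) < \<infinity>"
    using AE1
  proof (rule AE_mp, intro AE_I2 impI)
    fix \<psi> :: "nat \<times> nat \<Rightarrow> real"
    assume fin: "(\<integral>\<^sup>+u. ?W u * ennreal \<bar>\<psi> (?idx u)\<bar> \<partial>count_space UNIV) \<noteq> \<infinity>"
    have "(\<integral>\<^sup>+u. ennreal ((\<lambda>(i, j, k). 1 - exp (- (r k * \<theta> (i, k) * \<psi> (j, k)))) u) \<partial>count_space UNIV)
        \<le> (\<integral>\<^sup>+u. ?W u * ennreal \<bar>\<psi> (?idx u)\<bar> \<partial>count_space UNIV)"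
    proof (intro nn_integral_mono)
      fix u :: "nat \<times> nat \<times> nat"
      obtain i j k where u: "u = (i, j, k)" by (cases u) auto
      have "ennreal (1 - exp (- (r k * \<theta> (i, k) * \<psi> (j, k)))) \<le> ennreal \<bar>r k * \<theta> (i, k) * \<psi> (j, k)\<bar>"
        by (rule one_minus_exp_le)
      also have "\<dots> = ennreal \<bar>r k\<bar> * ennreal \<bar>\<theta> (i, k)\<bar> * ennreal \<bar>\<psi> (j, k)\<bar>"
        by (rule ennreal_abs_mult3)
      finally show "ennreal ((\<lambda>(i, j, k). 1 - exp (- (r k * \<theta> (i, k) * \<psi> (j, k)))) u) \<le> ?W u * ennreal \<bar>\<psi> (?idx u)\<bar>"
        using u by simp
    qed
    then show "(\<integral>\<^sup>+u. ennreal ((\<lambda>(i, j, k). 1 - exp (- (r k * \<theta> (i, k) * \<psi> (j, k)))) u) \<partial>count_space UNIV) < \<infinity>"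
      using fin by (simp add: le_less_trans less_top)
  qed
  then show ?thesis unfolding Meq .
qed


theorem lemma2:
  fixes g0rho crho g0tau ctau g0 c e f :: real
    and Prho Ptau Pr :: "(nat \<Rightarrow> real) measure"
  assumes "0 < g0rho" "0 < crho" "0 < g0tau" "0 < ctau" "0 < g0" "0 < c"
    and "0 < e" "0 < f"
    and "gamma_process_law g0rho crho Prho"
    and "gamma_process_law g0tau ctau Ptau"
    and "gamma_process_law g0 c Pr"
  shows "AE z in ggp_law Prho Ptau Pr e f. finite {(i, j). ggp_adj z i j}"
proof -
  have lawr: "poisson_process_law (gamma_process_intensity g0rho crho) Prho"
    and lawt: "poisson_process_law (gamma_process_intensity g0tau ctau) Ptau"
    and lawk: "poisson_process_law (gamma_process_intensity g0 c) Pr"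
    using assms(9-11) unfolding gamma_process_law_def by auto
  have gsum: "AE x in P. (\<integral>\<^sup>+i. ennreal (x i) \<partial>count_space UNIV) < \<infinity>"
    if law: "poisson_process_law (gamma_process_intensity a b) P" and ab: "0 < a" "0 < b" for a b P
  proof -
    have "AE x in P. (\<Sum>i. ennreal (x i)) < \<infinity>"
      by (rule poisson_sum_bound[OF law CC_borel CC_bound(2)[OF ab] CC_cover CC_fin[OF ab]])
    then show ?thesis by (simp add: nn_integral_count_space_nat)
  qed
  have AEr: "AE x in Prho. (\<integral>\<^sup>+i. ennreal (x i) \<partial>count_space UNIV) < \<infinity>"
    using gsum[OF lawr assms(1,2)] .
  have AEt: "AE x in Ptau. (\<integral>\<^sup>+i. ennreal (x i) \<partial>count_space UNIV) < \<infinity>"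
    using gsum[OF lawt assms(3,4)] .
  have AEk: "AE x in Pr. (\<integral>\<^sup>+i. ennreal \<bar>x i\<bar> \<partial>count_space UNIV) < \<infinity>"
    using gsum[OF lawk assms(5,6)] poisson_pos[OF lawk gpi_nonpos]
    by eventually_elim (simp add: less_imp_le)
  have ps: "prob_space Prho" "prob_space Ptau" "prob_space Pr"
    using poisson_basic(1)[OF lawr] poisson_basic(1)[OF lawt] poisson_basic(1)[OF lawk] by auto
  have sf1: "sigma_finite_measure (Ptau \<Otimes>\<^sub>M Pr)"
    using ps by (intro prob_space_imp_sigma_finite prob_space_pair)
  have sf2: "sigma_finite_measure Pr" "sigma_finite_measure Ptau"
    using ps by (auto intro: prob_space_imp_sigma_finite)
  let ?M0 = "Prho \<Otimes>\<^sub>M (Ptau \<Otimes>\<^sub>M Pr)"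
  have AE0: "AE x in ?M0. (\<integral>\<^sup>+i. ennreal (fst x i) \<partial>count_space UNIV) < \<infinity>
      \<and> (\<integral>\<^sup>+i. ennreal (fst (snd x) i) \<partial>count_space UNIV) < \<infinity>
      \<and> (\<integral>\<^sup>+i. ennreal \<bar>snd (snd x) i\<bar> \<partial>count_space UNIV) < \<infinity>"
  proof -
    have 1: "AE x in ?M0. (\<integral>\<^sup>+i. ennreal (fst x i) \<partial>count_space UNIV) < \<infinity>"
      using AE_pair_fst'[OF AEr sf1] .
    have 2: "AE x in ?M0. (\<integral>\<^sup>+i. ennreal (fst (snd x) i) \<partial>count_space UNIV) < \<infinity>"
      using AE_pair_snd'[OF AE_pair_fst'[OF AEt sf2(1)] sf1] .
    have 3: "AE x in ?M0. (\<integral>\<^sup>+i. ennreal \<bar>snd (snd x) i\<bar> \<partial>count_space UNIV) < \<infinity>"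
      using AE_pair_snd'[OF AE_pair_snd'[OF AEk sf2(1)] sf1] .
    show ?thesis using 1 2 3 by eventually_elim auto
  qed
  let ?S = "PiM (UNIV :: (nat \<times> nat \<times> nat) set) (\<lambda>_. count_space (UNIV :: bool set))"
  have Pset: "{y \<in> space ?S. \<not> cnt y < \<infinity>} \<in> sets ?S" by measurable
  have sets_bern: "\<And>F. sets (PiM (UNIV :: (nat \<times> nat \<times> nat) set) (\<lambda>(i, j, k). bernoulli_measure (F i j k))) = sets ?S"
    by (rule sets_PiM_cong) (auto simp: bernoulli_measure_def)
  have sp_gamma: "\<And>a s. space (PiM (UNIV :: (nat \<times> nat) set) (\<lambda>t. gamma_measure (a t) s)) \<noteq> {}"
    by (simp add: space_PiM)
  have sp_gamma2: "\<And>a s. space (PiM (UNIV :: (nat \<times> nat) set) (\<lambda>(i, k). gamma_measure (a i) s)) \<noteq> {}"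
    by (simp add: space_PiM split_beta)
  have level2: "AE y in bind (PiM UNIV (\<lambda>(j, k). gamma_measure (tau j) (1 / f))) (\<lambda>psi.
           PiM UNIV (\<lambda>(i, j, k). bernoulli_measure (1 - exp (- (r k * theta (i, k) * psi (j, k)))))). cnt y < \<infinity>"
    if T: "(\<integral>\<^sup>+t. ennreal \<bar>r (snd t)\<bar> * ennreal \<bar>theta t\<bar> \<partial>count_space UNIV) < \<infinity>"
      and St: "(\<integral>\<^sup>+j. ennreal (tau j) \<partial>count_space UNIV) < \<infinity>"
    for tau r :: "nat \<Rightarrow> real" and theta :: "nat \<times> nat \<Rightarrow> real"
  proof (rule AE_bind_nomeas[OF sp_gamma2 _ Pset])
    show "\<And>psi. sets (PiM UNIV (\<lambda>(i, j, k). bernoulli_measure (1 - exp (- (r k * theta (i, k) * psi (j, k)))))) = sets ?S"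
      by (rule sets_bern)
    show "AE psi in PiM UNIV (\<lambda>(j, k). gamma_measure (tau j) (1 / f)).
        AE y in PiM UNIV (\<lambda>(i, j, k). bernoulli_measure (1 - exp (- (r k * theta (i, k) * psi (j, k))))). cnt y < \<infinity>"
      using psi_level[OF assms(8) T St]
    proof (rule eventually_mono)
      fix psi :: "nat \<times> nat \<Rightarrow> real"
      let ?p = "\<lambda>(i, j, k). 1 - exp (- (r k * theta (i, k) * psi (j, k)))"
      assume "(\<integral>\<^sup>+u. ennreal (?p u) \<partial>count_space UNIV) < \<infinity>"
      then have "AE z in PiM UNIV (\<lambda>t. bernoulli_measure (?p t)). cnt z < \<infinity>"
        by (rule bern_level)
      moreover have eq: "(\<lambda>t. bernoulli_measure (?p t)) = (\<lambda>(i, j, k). bernoulli_measure (1 - exp (- (r k * theta (i, k) * psi (j, k)))))"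
        by (auto simp: fun_eq_iff)
      ultimately show "AE y in PiM UNIV (\<lambda>(i, j, k). bernoulli_measure (1 - exp (- (r k * theta (i, k) * psi (j, k))))). cnt y < \<infinity>"
        by metis
    qed
  qed
  have level1: "AE y in bind (PiM UNIV (\<lambda>(i, k). gamma_measure (rho i) (1 / e))) (\<lambda>theta.
         bind (PiM UNIV (\<lambda>(j, k). gamma_measure (tau j) (1 / f))) (\<lambda>psi.
           PiM UNIV (\<lambda>(i, j, k). bernoulli_measure (1 - exp (- (r k * theta (i, k) * psi (j, k))))))). cnt y < \<infinity>"
    if Sr: "(\<integral>\<^sup>+k. ennreal \<bar>r k\<bar> \<partial>count_space UNIV) < \<infinity>"
      and Srho: "(\<integral>\<^sup>+i. ennreal (rho i) \<partial>count_space UNIV) < \<infinity>"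
      and St: "(\<integral>\<^sup>+j. ennreal (tau j) \<partial>count_space UNIV) < \<infinity>"
    for rho tau r :: "nat \<Rightarrow> real"
  proof (rule AE_bind_nomeas[OF sp_gamma2 _ Pset])
    show "sets (bind (PiM UNIV (\<lambda>(j, k). gamma_measure (tau j) (1 / f))) (\<lambda>psi.
           PiM UNIV (\<lambda>(i, j, k). bernoulli_measure (1 - exp (- (r k * theta (i, k) * psi (j, k))))))) = sets ?S"
      for theta :: "nat \<times> nat \<Rightarrow> real"
      by (rule sets_bind[OF sets_bern sp_gamma2])
    show "AE theta in PiM UNIV (\<lambda>(i, k). gamma_measure (rho i) (1 / e)).
        AE y in bind (PiM UNIV (\<lambda>(j, k). gamma_measure (tau j) (1 / f))) (\<lambda>psi.
           PiM UNIV (\<lambda>(i, j, k). bernoulli_measure (1 - exp (- (r k * theta (i, k) * psi (j, k)))))). cnt y < \<infinity>"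
      using theta_level[OF assms(7) Sr Srho]
    proof (rule eventually_mono)
      fix theta :: "nat \<times> nat \<Rightarrow> real"
      assume "(\<integral>\<^sup>+t. ennreal \<bar>r (snd t)\<bar> * ennreal \<bar>theta t\<bar> \<partial>count_space UNIV) < \<infinity>"
      then show "AE y in bind (PiM UNIV (\<lambda>(j, k). gamma_measure (tau j) (1 / f))) (\<lambda>psi.
           PiM UNIV (\<lambda>(i, j, k). bernoulli_measure (1 - exp (- (r k * theta (i, k) * psi (j, k)))))). cnt y < \<infinity>"
        by (rule level2[OF _ St])
    qed
  qed
  have sp0: "space ?M0 \<noteq> {}"
    using poisson_basic(3)[OF lawr] poisson_basic(3)[OF lawt] poisson_basic(3)[OF lawk]
    by (simp add: space_pair_measure)
  have AEc: "AE y in ggp_law Prho Ptau Pr e f. cnt y < \<infinity>"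
    unfolding ggp_law_def
  proof (rule AE_bind_nomeas[OF sp0 _ Pset])
    fix x assume "x \<in> space ?M0"
    obtain rho tau r where x: "x = (rho, tau, r)" by (cases x) auto
    show "sets ((\<lambda>(rho, tau, r).
       bind (PiM UNIV (\<lambda>(i, k). gamma_measure (rho i) (1 / e))) (\<lambda>theta.
         bind (PiM UNIV (\<lambda>(j, k). gamma_measure (tau j) (1 / f))) (\<lambda>psi.
           PiM UNIV (\<lambda>(i, j, k). bernoulli_measure (1 - exp (- (r k * theta (i, k) * psi (j, k)))))))) x) = sets ?S"
      unfolding x by (simp only: case_prod_conv) (intro sets_bind[OF _ sp_gamma2] sets_bind[OF sets_bern sp_gamma2])
  next
    show "AE x in ?M0. AE y in (\<lambda>(rho, tau, r).
       bind (PiM UNIV (\<lambda>(i, k). gamma_measure (rho i) (1 / e))) (\<lambda>theta.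
         bind (PiM UNIV (\<lambda>(j, k). gamma_measure (tau j) (1 / f))) (\<lambda>psi.
           PiM UNIV (\<lambda>(i, j, k). bernoulli_measure (1 - exp (- (r k * theta (i, k) * psi (j, k)))))))) x. cnt y < \<infinity>"
      using AE0
    proof (rule eventually_mono)
      fix x :: "(nat \<Rightarrow> real) \<times> (nat \<Rightarrow> real) \<times> (nat \<Rightarrow> real)"
      obtain rho tau r where x: "x = (rho, tau, r)" by (cases x) auto
      assume "(\<integral>\<^sup>+i. ennreal (fst x i) \<partial>count_space UNIV) < \<infinity>
      \<and> (\<integral>\<^sup>+i. ennreal (fst (snd x) i) \<partial>count_space UNIV) < \<infinity>
      \<and> (\<integral>\<^sup>+i. ennreal \<bar>snd (snd x) i\<bar> \<partial>count_space UNIV) < \<infinity>"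
      then have h: "(\<integral>\<^sup>+i. ennreal (rho i) \<partial>count_space UNIV) < \<infinity>"
        "(\<integral>\<^sup>+i. ennreal (tau i) \<partial>count_space UNIV) < \<infinity>"
        "(\<integral>\<^sup>+i. ennreal \<bar>r i\<bar> \<partial>count_space UNIV) < \<infinity>" using x by auto
      show "AE y in (\<lambda>(rho, tau, r).
       bind (PiM UNIV (\<lambda>(i, k). gamma_measure (rho i) (1 / e))) (\<lambda>theta.
         bind (PiM UNIV (\<lambda>(j, k). gamma_measure (tau j) (1 / f))) (\<lambda>psi.
           PiM UNIV (\<lambda>(i, j, k). bernoulli_measure (1 - exp (- (r k * theta (i, k) * psi (j, k)))))))) x. cnt y < \<infinity>"
        unfolding x case_prod_conv by (rule level1[OF h(3) h(1) h(2)])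
    qed
  qed
  show ?thesis
    using AEc
  proof (rule eventually_mono)
    fix z assume "cnt z < \<infinity>"
    then have fin: "finite {t. z t}" by (rule cnt_finite)
    have "{(i, j). ggp_adj z i j} \<subseteq> (\<lambda>(i, j, k). (i, j)) ` {t. z t}"
      unfolding ggp_adj_def by (auto intro: image_eqI[where x="(_, _, _)"])
    then show "finite {(i, j). ggp_adj z i j}"
      using fin by (rule finite_subset[OF _ finite_imageI])
  qed
qed

end
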